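(* Let $G$ be a non-amenable discrete group and $\partial_F G$ its Furstenberg boundary. For every unital positive isometric $G$-equivariant embedding $\iota: C(\partial_F G)\to\ell^\infty(G)$, we have $\iota(C(\partial_F G))\cap c_0(G)=\{0\}$.
   Context: $\ell^\infty(G)$ carries the left translation action of $G$; $c_0(G)$ is the space of functions on $G$ vanishing at infinity. The Furstenberg boundary $\partial_F G$ is the universal $G$-boundary (minimal, strongly proximal compact $G$-space of which every $G$-boundary is a continuous equivariant image). *)

theory Defs
  imports "HOL-Analysis.Analysis" "HOL-Algebra.Group"
begin

definition Cfun :: "'x topology \<Rightarrow> ('x \<Rightarrow> complex) set" where
  "Cfun X = {f. continuous_map X euclidean f \<and> (\<forall>x. x \<notin> topspace X \<longrightarrow> f x = 0)}"

definition oneX :: "'x topology \<Rightarrow> 'x \<Rightarrow> complex" where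
  "oneX X = (\<lambda>x. if x \<in> topspace X then 1 else 0)"

definition linf :: "('g, 'b) monoid_scheme \<Rightarrow> ('g \<Rightarrow> complex) set" where
  "linf G = {\<phi>. (\<exists>B. \<forall>t\<in>carrier G. norm (\<phi> t) \<le> B) \<and> (\<forall>t. t \<notin> carrier G \<longrightarrow> \<phi> t = 0)}"

definition oneG :: "('g, 'b) monoid_scheme \<Rightarrow> 'g \<Rightarrow> complex" where
  "oneG G = (\<lambda>t. if t \<in> carrier G then 1 else 0)"

definition c0 :: "('g, 'b) monoid_scheme \<Rightarrow> ('g \<Rightarrow> complex) set" where
  "c0 G = {\<phi> \<in> linf G. \<forall>e>0. finite {t \<in> carrier G. norm (\<phi> t) \<ge> e}}"

definition supn :: "'a set \<Rightarrow> ('a \<Rightarrow> complex) \<Rightarrow> real" where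
  "supn S f = (SUP x\<in>S. norm (f x))"

definition cpos :: "complex \<Rightarrow> bool" where
  "cpos z \<longleftrightarrow> Im z = 0 \<and> Re z \<ge> 0"

definition ltrans :: "('g, 'b) monoid_scheme \<Rightarrow> 'g \<Rightarrow> ('g \<Rightarrow> 'c::zero) \<Rightarrow> 'g \<Rightarrow> 'c" where
  "ltrans G g \<phi> = (\<lambda>t. if t \<in> carrier G then \<phi> (inv\<^bsub>G\<^esub> g \<otimes>\<^bsub>G\<^esub> t) else 0)"

definition gspace :: "('g, 'b) monoid_scheme \<Rightarrow> 'x topology \<Rightarrow> ('g \<Rightarrow> 'x \<Rightarrow> 'x) \<Rightarrow> bool" where
  "gspace G X \<alpha> \<longleftrightarrow>
     (\<forall>g\<in>carrier G. continuous_map X X (\<alpha> g)) \<and>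
     (\<forall>x\<in>topspace X. \<alpha> \<one>\<^bsub>G\<^esub> x = x) \<and>
     (\<forall>g\<in>carrier G. \<forall>h\<in>carrier G. \<forall>x\<in>topspace X. \<alpha> (g \<otimes>\<^bsub>G\<^esub> h) x = \<alpha> g (\<alpha> h x))"

definition ctrans :: "('g, 'b) monoid_scheme \<Rightarrow> 'x topology \<Rightarrow> ('g \<Rightarrow> 'x \<Rightarrow> 'x) \<Rightarrow> 'g
                      \<Rightarrow> ('x \<Rightarrow> complex) \<Rightarrow> 'x \<Rightarrow> complex" where
  "ctrans G X \<alpha> g f = (\<lambda>x. if x \<in> topspace X then f (\<alpha> (inv\<^bsub>G\<^esub> g) x) else 0)"

definition minimal_gspace :: "('g, 'b) monoid_scheme \<Rightarrow> 'x topology \<Rightarrow> ('g \<Rightarrow> 'x \<Rightarrow> 'x) \<Rightarrow> bool" where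
  "minimal_gspace G X \<alpha> \<longleftrightarrow>
     (\<forall>C. closedin X C \<and> C \<noteq> {} \<and> (\<forall>g\<in>carrier G. \<forall>x\<in>C. \<alpha> g x \<in> C) \<longrightarrow> C = topspace X)"

text \<open>Probability (Radon) measures on compact X are represented as states on C(X).\<close>
definition cstate :: "'x topology \<Rightarrow> (('x \<Rightarrow> complex) \<Rightarrow> complex) \<Rightarrow> bool" where
  "cstate X \<mu> \<longleftrightarrow>
     (\<forall>f\<in>Cfun X. \<forall>h\<in>Cfun X. \<forall>a b. \<mu> (\<lambda>x. a * f x + b * h x) = a * \<mu> f + b * \<mu> h) \<and>
     (\<forall>f\<in>Cfun X. (\<forall>x. cpos (f x)) \<longrightarrow> cpos (\<mu> f)) \<and>
     \<mu> (oneX X) = 1"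

text \<open>Strongly proximal: the weak* closure of every orbit G.mu of a probability measure
  contains a point mass; (g.mu)(f) = mu(f o g).\<close>
definition strongly_proximal :: "('g, 'b) monoid_scheme \<Rightarrow> 'x topology \<Rightarrow> ('g \<Rightarrow> 'x \<Rightarrow> 'x) \<Rightarrow> bool" where
  "strongly_proximal G X \<alpha> \<longleftrightarrow>
     (\<forall>\<mu>. cstate X \<mu> \<longrightarrow>
        (\<exists>x\<in>topspace X. \<forall>F e. finite F \<and> F \<subseteq> Cfun X \<and> e > 0 \<longrightarrow>
            (\<exists>g\<in>carrier G. \<forall>f\<in>F.
               norm (\<mu> (\<lambda>y. if y \<in> topspace X then f (\<alpha> g y) else 0) - f x) < e)))"

definition gboundary :: "('g, 'b) monoid_scheme \<Rightarrow> 'x topology \<Rightarrow> ('g \<Rightarrow> 'x \<Rightarrow> 'x) \<Rightarrow> bool" where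
  "gboundary G X \<alpha> \<longleftrightarrow>
     gspace G X \<alpha> \<and> compact_space X \<and> Hausdorff_space X \<and> topspace X \<noteq> {} \<and>
     minimal_gspace G X \<alpha> \<and> strongly_proximal G X \<alpha>"

definition factor_map :: "('g, 'b) monoid_scheme \<Rightarrow> 'x topology \<Rightarrow> ('g \<Rightarrow> 'x \<Rightarrow> 'x)
                          \<Rightarrow> 'y topology \<Rightarrow> ('g \<Rightarrow> 'y \<Rightarrow> 'y) \<Rightarrow> ('x \<Rightarrow> 'y) \<Rightarrow> bool" where
  "factor_map G X \<alpha> Y \<beta> \<pi> \<longleftrightarrow>
     continuous_map X Y \<pi> \<and> \<pi> ` topspace X = topspace Y \<and>
     (\<forall>g\<in>carrier G. \<forall>x\<in>topspace X. \<pi> (\<alpha> g x) = \<beta> g (\<pi> x))"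

text \<open>Every G-boundary is a factor of beta G, hence is isomorphic to a
  G-boundary whose points are sets of ultrafilters on G, i.e. live in type 'g set set set;
  quantifying over those boundaries therefore covers all G-boundaries up to isomorphism.\<close>
definition furstenberg_boundary :: "('g, 'b) monoid_scheme \<Rightarrow> 'x topology \<Rightarrow> ('g \<Rightarrow> 'x \<Rightarrow> 'x) \<Rightarrow> bool" where
  "furstenberg_boundary G X \<alpha> \<longleftrightarrow>
     gboundary G X \<alpha> \<and>
     (\<forall>(Y :: 'g set set set topology) \<beta>. gboundary G Y \<beta> \<longrightarrow> (\<exists>\<pi>. factor_map G X \<alpha> Y \<beta> \<pi>))"

definition rlinf :: "('g, 'b) monoid_scheme \<Rightarrow> ('g \<Rightarrow> real) set" where
  "rlinf G = {f. (\<exists>B. \<forall>t\<in>carrier G. \<bar>f t\<bar> \<le> B) \<and> (\<forall>t. t \<notin> carrier G \<longrightarrow> f t = 0)}"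

definition amenable :: "('g, 'b) monoid_scheme \<Rightarrow> bool" where
  "amenable G \<longleftrightarrow> (\<exists>m :: ('g \<Rightarrow> real) \<Rightarrow> real.
     (\<forall>f\<in>rlinf G. \<forall>h\<in>rlinf G. \<forall>a b. m (\<lambda>t. a * f t + b * h t) = a * m f + b * m h) \<and>
     (\<forall>f\<in>rlinf G. (\<forall>t. f t \<ge> 0) \<longrightarrow> m f \<ge> 0) \<and>
     m (\<lambda>t. if t \<in> carrier G then 1 else 0) = 1 \<and>
     (\<forall>g\<in>carrier G. \<forall>f\<in>rlinf G. m (ltrans G g f) = m f))"

definition upie_embedding :: "('g, 'b) monoid_scheme \<Rightarrow> 'x topology \<Rightarrow> ('g \<Rightarrow> 'x \<Rightarrow> 'x)
                               \<Rightarrow> (('x \<Rightarrow> complex) \<Rightarrow> ('g \<Rightarrow> complex)) \<Rightarrow> bool" where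
  "upie_embedding G X \<alpha> \<iota> \<longleftrightarrow>
     \<iota> ` Cfun X \<subseteq> linf G \<and>
     (\<forall>f\<in>Cfun X. \<forall>h\<in>Cfun X. \<forall>a b. \<iota> (\<lambda>x. a * f x + b * h x) = (\<lambda>t. a * \<iota> f t + b * \<iota> h t)) \<and>
     \<iota> (oneX X) = oneG G \<and>
     (\<forall>f\<in>Cfun X. (\<forall>x. cpos (f x)) \<longrightarrow> (\<forall>t. cpos (\<iota> f t))) \<and>
     (\<forall>f\<in>Cfun X. supn (carrier G) (\<iota> f) = supn (topspace X) f) \<and>
     (\<forall>g\<in>carrier G. \<forall>f\<in>Cfun X. \<iota> (ctrans G X \<alpha> g f) = ltrans G g (\<iota> f))"

end

theory Submission
  imports Defs
begin


lemma openin_finite_all: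
  assumes "finite F" "\<And>h. h \<in> F \<Longrightarrow> openin X {z \<in> topspace X. P h z}"
  shows "openin X {z \<in> topspace X. \<forall>h\<in>F. P h z}"
  using assms
proof (induction F rule: finite_induct)
  case empty then show ?case by (simp add: openin_topspace)
next
  case (insert a F)
  have e: "{z \<in> topspace X. \<forall>h\<in>insert a F. P h z} = {z \<in> topspace X. P a z} \<inter> {z \<in> topspace X. \<forall>h\<in>F. P h z}"
    by auto
  have "openin X {z \<in> topspace X. P a z}" using insert.prems by simp
  moreover have "openin X {z \<in> topspace X. \<forall>h\<in>F. P h z}" using insert.IH insert.prems by simp
  ultimately show ?case unfolding e by (rule openin_Int)
qed

lemma ctrans_Cfun:
  assumes "group G" "gspace G X \<alpha>" "g \<in> carrier G" "f \<in> Cfun X"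
  shows "ctrans G X \<alpha> g f \<in> Cfun X"
proof -
  interpret group G by fact
  have c: "continuous_map X X (\<alpha> (inv\<^bsub>G\<^esub> g))" using assms unfolding gspace_def by auto
  have cf: "continuous_map X euclidean f" using assms(4) unfolding Cfun_def by auto
  have "continuous_map X euclidean (f \<circ> \<alpha> (inv\<^bsub>G\<^esub> g))" using continuous_map_compose[OF c cf] .
  then have "continuous_map X euclidean (ctrans G X \<alpha> g f)"
    by (rule continuous_map_eq) (simp add: ctrans_def)
  then show ?thesis unfolding Cfun_def ctrans_def by auto
qed


lemma ctrans_inv_apply:
  assumes "group G" "g \<in> carrier G" "y \<in> topspace X"
  shows "ctrans G X \<alpha> (inv\<^bsub>G\<^esub> g) f y = f (\<alpha> g y)"
  using assms by (simp add: ctrans_def group.inv_inv)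

lemma iota_shift:
  assumes "group G" "upie_embedding G X \<alpha> \<iota>" "g \<in> carrier G" "s \<in> carrier G" "f \<in> Cfun X"
  shows "\<iota> f (g \<otimes>\<^bsub>G\<^esub> s) = \<iota> (ctrans G X \<alpha> (inv\<^bsub>G\<^esub> g) f) s"
proof -
  interpret group G by fact
  have "\<iota> (ctrans G X \<alpha> (inv\<^bsub>G\<^esub> g) f) = ltrans G (inv\<^bsub>G\<^esub> g) (\<iota> f)"
    using assms unfolding upie_embedding_def by auto
  then show ?thesis using assms by (simp add: ltrans_def)
qed



lemma cmap_in:
  "continuous_map X Y f \<Longrightarrow> x \<in> topspace X \<Longrightarrow> f x \<in> topspace Y"
  using continuous_map_image_subset_topspace by blast

lemma minimal_hit:
  assumes "group G" "gspace G X \<alpha>" "minimal_gspace G X \<alpha>" "openin X W" "W \<noteq> {}" "y \<in> topspace X"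
  shows "\<exists>g\<in>carrier G. \<alpha> g y \<in> W"
proof (rule ccontr)
  assume nh: "\<not> (\<exists>g\<in>carrier G. \<alpha> g y \<in> W)"
  have cont: "\<And>g. g \<in> carrier G \<Longrightarrow> continuous_map X X (\<alpha> g)"
    using assms(2) unfolding gspace_def by blast
  have one: "\<And>x. x \<in> topspace X \<Longrightarrow> \<alpha> \<one>\<^bsub>G\<^esub> x = x"
    using assms(2) unfolding gspace_def by blast
  have mult: "\<And>g h x. g \<in> carrier G \<Longrightarrow> h \<in> carrier G \<Longrightarrow> x \<in> topspace X \<Longrightarrow> \<alpha> (g \<otimes>\<^bsub>G\<^esub> h) x = \<alpha> g (\<alpha> h x)"
    using assms(2) unfolding gspace_def by blast
  define Ob where "Ob = (\<Union>g\<in>carrier G. {z \<in> topspace X. \<alpha> g z \<in> W})"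
  define C where "C = topspace X - Ob"
  have "openin X Ob" unfolding Ob_def
  proof (rule openin_Union)
    fix S assume "S \<in> (\<lambda>g. {z \<in> topspace X. \<alpha> g z \<in> W}) ` carrier G"
    then obtain g where g: "g \<in> carrier G" and S: "S = {z \<in> topspace X. \<alpha> g z \<in> W}" by blast
    show "openin X S" unfolding S using cont[OF g] assms(4) by (rule openin_continuous_map_preimage)
  qed
  then have cl: "closedin X C" unfolding C_def by (intro closedin_diff closedin_topspace)
  have "y \<in> C" using nh assms(6) unfolding C_def Ob_def by blast
  then have ne: "C \<noteq> {}" by blast
  have inv: "\<forall>h\<in>carrier G. \<forall>z\<in>C. \<alpha> h z \<in> C"
  proof (intro ballI)
    fix h z assume h: "h \<in> carrier G" and z: "z \<in> C"
    have zt: "z \<in> topspace X" using z unfolding C_def by blast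
    have "\<alpha> h z \<in> topspace X" using cmap_in[OF cont[OF h] zt] .
    moreover have "\<alpha> g (\<alpha> h z) \<notin> W" if g: "g \<in> carrier G" for g
    proof -
      have gh: "g \<otimes>\<^bsub>G\<^esub> h \<in> carrier G" using g h assms(1) by (simp add: group.is_monoid monoid.m_closed)
      have "\<alpha> (g \<otimes>\<^bsub>G\<^esub> h) z \<notin> W" using z gh unfolding C_def Ob_def by blast
      then show ?thesis using mult[OF g h zt] by simp
    qed
    ultimately show "\<alpha> h z \<in> C" unfolding C_def Ob_def by blast
  qed
  have "C = topspace X" using assms(3) cl ne inv unfolding minimal_gspace_def by blast
  moreover obtain w where w: "w \<in> W" using assms(5) by blast
  moreover have wt: "w \<in> topspace X" using w openin_subset[OF assms(4)] by blast
  moreover have "\<one>\<^bsub>G\<^esub> \<in> carrier G" using assms(1) by (simp add: group.is_monoid monoid.one_closed)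
  ultimately have "w \<notin> Ob" unfolding C_def by blast
  moreover have "w \<in> Ob" unfolding Ob_def using one[OF wt] w wt \<open>\<one>\<^bsub>G\<^esub> \<in> carrier G\<close> by force
  ultimately show False by blast
qed



lemma finite_amenable:
  assumes grp: "group G" and fin: "finite (carrier G)"
  shows "amenable G"
proof -
  let ?n = "real (card (carrier G))"
  define m where "m = (\<lambda>f :: 'a \<Rightarrow> real. (\<Sum>t\<in>carrier G. f t) / ?n)"
  have onec: "\<one>\<^bsub>G\<^esub> \<in> carrier G" using grp by (simp add: group.is_monoid monoid.one_closed)
  have npos: "?n > 0" using fin onec card_gt_0_iff by fastforce
  have lin: "\<forall>f\<in>rlinf G. \<forall>h\<in>rlinf G. \<forall>a b. m (\<lambda>t. a * f t + b * h t) = a * m f + b * m h"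
    unfolding m_def by (simp add: sum.distrib sum_distrib_left[symmetric] add_divide_distrib)
  have pos: "\<forall>f\<in>rlinf G. (\<forall>t. f t \<ge> 0) \<longrightarrow> m f \<ge> 0"
    unfolding m_def by (simp add: sum_nonneg)
  have unit: "m (\<lambda>t. if t \<in> carrier G then 1 else 0) = 1"
    unfolding m_def using npos by simp
  have invar: "\<forall>g\<in>carrier G. \<forall>f\<in>rlinf G. m (ltrans G g f) = m f"
  proof (intro ballI)
    fix g f assume g: "g \<in> carrier G" and f: "f \<in> rlinf G"
    have ig: "inv\<^bsub>G\<^esub> g \<in> carrier G" using grp g by (simp add: group.inv_closed)
    have "(\<Sum>t\<in>carrier G. ltrans G g f t) = (\<Sum>t\<in>carrier G. f (inv\<^bsub>G\<^esub> g \<otimes>\<^bsub>G\<^esub> t))"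
      by (rule sum.cong) (auto simp: ltrans_def)
    also have "\<dots> = (\<Sum>t\<in>(\<lambda>x. inv\<^bsub>G\<^esub> g \<otimes>\<^bsub>G\<^esub> x) ` carrier G. f t)"
      by (rule sum.reindex[symmetric, unfolded comp_def]) (rule group.inj_on_cmult[OF grp ig])
    also have "\<dots> = (\<Sum>t\<in>carrier G. f t)" using group.surj_const_mult[OF grp ig] by simp
    finally show "m (ltrans G g f) = m f" unfolding m_def by simp
  qed
  show ?thesis unfolding amenable_def using lin pos unit invar by blast
qed


lemma gspace_inv_cancel:
  assumes "group G" "gspace G X \<alpha>" "g \<in> carrier G" "z \<in> topspace X"
  shows "\<alpha> (inv\<^bsub>G\<^esub> g) (\<alpha> g z) = z"
proof -
  have ig: "inv\<^bsub>G\<^esub> g \<in> carrier G" using assms by (simp add: group.inv_closed)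
  have "\<alpha> (inv\<^bsub>G\<^esub> g \<otimes>\<^bsub>G\<^esub> g) z = \<alpha> (inv\<^bsub>G\<^esub> g) (\<alpha> g z)"
    using assms ig unfolding gspace_def by blast
  moreover have "inv\<^bsub>G\<^esub> g \<otimes>\<^bsub>G\<^esub> g = \<one>\<^bsub>G\<^esub>" using assms by (simp add: group.l_inv)
  moreover have "\<alpha> \<one>\<^bsub>G\<^esub> z = z" using assms unfolding gspace_def by blast
  ultimately show ?thesis by simp
qed


theorem proposition3p10:
  fixes G :: "'g monoid" and X :: "'x topology" and \<alpha> :: "'g \<Rightarrow> 'x \<Rightarrow> 'x"
    and \<iota> :: "('x \<Rightarrow> complex) \<Rightarrow> ('g \<Rightarrow> complex)"
  assumes "group G"
    and "\<not> amenable G"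
    and "furstenberg_boundary G X \<alpha>"
    and "upie_embedding G X \<alpha> \<iota>"
  shows "\<iota> ` Cfun X \<inter> c0 G = {(\<lambda>t. 0)}"
proof -
  note grp = assms(1)
  interpret grp: group G by fact
  have gb: "gboundary G X \<alpha>" using assms(3) unfolding furstenberg_boundary_def by blast
  have gs: "gspace G X \<alpha>" and cpt: "compact_space X" and hd: "Hausdorff_space X"
    and mn: "minimal_gspace G X \<alpha>" and sp: "strongly_proximal G X \<alpha>"
    using gb unfolding gboundary_def by simp_all
  have cont: "\<And>g. g \<in> carrier G \<Longrightarrow> continuous_map X X (\<alpha> g)"
    using gs unfolding gspace_def by blast
  have mult: "\<And>g h x. g \<in> carrier G \<Longrightarrow> h \<in> carrier G \<Longrightarrow> x \<in> topspace X \<Longrightarrow> \<alpha> (g \<otimes>\<^bsub>G\<^esub> h) x = \<alpha> g (\<alpha> h x)"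
    using gs unfolding gspace_def by blast
  have lin: "\<And>f h a b. f \<in> Cfun X \<Longrightarrow> h \<in> Cfun X \<Longrightarrow> \<iota> (\<lambda>x. a * f x + b * h x) = (\<lambda>t. a * \<iota> f t + b * \<iota> h t)"
    using assms(4) unfolding upie_embedding_def by blast
  have unit: "\<iota> (oneX X) = oneG G" using assms(4) unfolding upie_embedding_def by blast
  have posi: "\<And>f. f \<in> Cfun X \<Longrightarrow> (\<forall>x. cpos (f x)) \<Longrightarrow> (\<forall>t. cpos (\<iota> f t))"
    using assms(4) unfolding upie_embedding_def by blast
  have shift: "\<And>g s f. g \<in> carrier G \<Longrightarrow> s \<in> carrier G \<Longrightarrow> f \<in> Cfun X \<Longrightarrow>
      \<iota> f (g \<otimes>\<^bsub>G\<^esub> s) = \<iota> (ctrans G X \<alpha> (inv\<^bsub>G\<^esub> g) f) s"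
    by (rule iota_shift[OF grp assms(4)])
  have ctC: "\<And>g f. g \<in> carrier G \<Longrightarrow> f \<in> Cfun X \<Longrightarrow> ctrans G X \<alpha> (inv\<^bsub>G\<^esub> g) f \<in> Cfun X"
    by (rule ctrans_Cfun[OF grp gs grp.inv_closed])
  have ctA: "\<And>g f y. g \<in> carrier G \<Longrightarrow> y \<in> topspace X \<Longrightarrow> ctrans G X \<alpha> (inv\<^bsub>G\<^esub> g) f y = f (\<alpha> g y)"
    by (rule ctrans_inv_apply[OF grp])
  have zC: "(\<lambda>x. 0) \<in> Cfun X" unfolding Cfun_def by simp
  have i0: "\<iota> (\<lambda>x. 0) = (\<lambda>t. 0)"
    using lin[OF zC zC, of 0 0] by simp
  have z0: "(\<lambda>t. 0) \<in> c0 G" unfolding c0_def linf_def by auto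
  show ?thesis
  proof
    show "{\<lambda>t. 0} \<subseteq> \<iota> ` Cfun X \<inter> c0 G" 
    proof -
      have "(\<lambda>t. 0) \<in> \<iota> ` Cfun X" using zC i0 by (metis image_eqI)
      then show ?thesis using z0 by blast
    qed
  next
    show "\<iota> ` Cfun X \<inter> c0 G \<subseteq> {\<lambda>t. 0}"
    proof
      fix \<phi> assume "\<phi> \<in> \<iota> ` Cfun X \<inter> c0 G"
      then obtain f where fC: "f \<in> Cfun X" and phi: "\<phi> = \<iota> f" and pc0: "\<phi> \<in> c0 G" by blast
      show "\<phi> \<in> {\<lambda>t. 0}"
      proof (rule ccontr)
        assume nz: "\<phi> \<notin> {\<lambda>t. 0}"
        have "\<exists>x\<in>topspace X. f x \<noteq> 0"
        proof (rule ccontr)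
          assume "\<not> ?thesis"
          then have "f = (\<lambda>x. 0)" using fC unfolding Cfun_def by (metis (mono_tags, lifting) mem_Collect_eq)
          then show False using nz phi i0 by simp
        qed
        then obtain x where xt: "x \<in> topspace X" and fx: "f x \<noteq> 0" by blast
        define L where "L = {y \<in> topspace X. \<forall>F e. finite F \<and> F \<subseteq> Cfun X \<and> e > 0 \<longrightarrow>
             (\<exists>s\<in>carrier G. \<forall>h\<in>F. norm (\<iota> h s - h y) < e)}"
        have onec: "\<one>\<^bsub>G\<^esub> \<in> carrier G" by (rule grp.one_closed)
        define \<mu> where "\<mu> = (\<lambda>h. \<iota> h \<one>\<^bsub>G\<^esub>)"
        have cst: "cstate X \<mu>"
          unfolding cstate_def
        proof (intro conjI ballI allI impI)
          fix f1 h1 a b assume "f1 \<in> Cfun X" "h1 \<in> Cfun X"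
          then show "\<mu> (\<lambda>x. a * f1 x + b * h1 x) = a * \<mu> f1 + b * \<mu> h1"
            unfolding \<mu>_def using lin by simp
        next
          fix f1 assume "f1 \<in> Cfun X" "\<forall>x. cpos (f1 x)"
          then show "cpos (\<mu> f1)" unfolding \<mu>_def using posi by blast
        next
          show "\<mu> (oneX X) = 1" unfolding \<mu>_def unit oneG_def using onec by simp
        qed
        obtain x0 where x0t: "x0 \<in> topspace X" and x0p: "\<And>F e. finite F \<Longrightarrow> F \<subseteq> Cfun X \<Longrightarrow> e > 0 \<Longrightarrow>
            (\<exists>g\<in>carrier G. \<forall>f\<in>F. norm (\<mu> (\<lambda>y. if y \<in> topspace X then f (\<alpha> g y) else 0) - f x0) < e)"
          using sp[unfolded strongly_proximal_def, rule_format, OF cst] by metis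
        have "x0 \<in> L"
          unfolding L_def
        proof (intro CollectI conjI allI impI x0t)
          fix F e assume H: "finite F \<and> F \<subseteq> Cfun X \<and> (e::real) > 0"
          then obtain g where g: "g \<in> carrier G" and gp: "\<forall>f\<in>F. norm (\<mu> (\<lambda>y. if y \<in> topspace X then f (\<alpha> g y) else 0) - f x0) < e"
            using x0p[of F e] by metis
          have "\<forall>h\<in>F. norm (\<iota> h g - h x0) < e"
          proof
            fix h assume hF: "h \<in> F"
            then have hC: "h \<in> Cfun X" using H by blast
            have "(\<lambda>y. if y \<in> topspace X then h (\<alpha> g y) else 0) = ctrans G X \<alpha> (inv\<^bsub>G\<^esub> g) h"
              unfolding ctrans_def grp.inv_inv[OF g] by (rule refl)
            then have "\<mu> (\<lambda>y. if y \<in> topspace X then h (\<alpha> g y) else 0) = \<iota> h (g \<otimes>\<^bsub>G\<^esub> \<one>\<^bsub>G\<^esub>)"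
              unfolding \<mu>_def using shift[OF g onec hC] by simp
            then have "\<mu> (\<lambda>y. if y \<in> topspace X then h (\<alpha> g y) else 0) = \<iota> h g" using g by simp
            then show "norm (\<iota> h g - h x0) < e" using gp hF by metis
          qed
          then show "\<exists>s\<in>carrier G. \<forall>h\<in>F. norm (\<iota> h s - h x0) < e" using g by blast
        qed
        then have Lne: "L \<noteq> {}" by blast
        have Lsub: "L \<subseteq> topspace X" unfolding L_def by blast
        have "openin X (topspace X - L)"
          unfolding openin_subopen[of X "topspace X - L"]
        proof
          fix y assume y: "y \<in> topspace X - L"
          have nL: "\<not> (\<forall>F e. finite F \<and> F \<subseteq> Cfun X \<and> e > 0 \<longrightarrow>
             (\<exists>s\<in>carrier G. \<forall>h\<in>F. norm (\<iota> h s - h y) < e))"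
            using y unfolding L_def by blast
          then obtain F e where Fe0: "finite F \<and> F \<subseteq> Cfun X \<and> (e::real) > 0"
            and nex: "\<not> (\<exists>s\<in>carrier G. \<forall>h\<in>F. norm (\<iota> h s - h y) < e)" by blast
          have Fe: "finite F" "F \<subseteq> Cfun X" "e > 0" using Fe0 by auto
          have no: "\<exists>h\<in>F. norm (\<iota> h s - h y) \<ge> e" if "s \<in> carrier G" for s
            using nex that by (meson not_less)
          define T where "T = {z \<in> topspace X. \<forall>h\<in>F. norm (h z - h y) < e/2}"
          have "openin X T" unfolding T_def
          proof (rule openin_finite_all[OF Fe(1)])
            fix h assume "h \<in> F"
            then have hc: "continuous_map X euclidean h" using Fe(2) unfolding Cfun_def by blast
            have "openin X {z \<in> topspace X. h z \<in> ball (h y) (e/2)}"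
              by (rule openin_continuous_map_preimage[OF hc]) simp
            moreover have "{z \<in> topspace X. h z \<in> ball (h y) (e/2)} = {z \<in> topspace X. norm (h z - h y) < e/2}"
              by (simp add: dist_norm norm_minus_commute)
            ultimately show "openin X {z \<in> topspace X. norm (h z - h y) < e/2}" by simp
          qed
          moreover have "y \<in> T" unfolding T_def using y Fe(3) by simp
          moreover have "T \<subseteq> topspace X - L"
          proof
            fix z assume zT: "z \<in> T"
            have "z \<notin> L"
            proof
              assume "z \<in> L"
              then have zL: "\<forall>F e. finite F \<and> F \<subseteq> Cfun X \<and> e > 0 \<longrightarrow>
                  (\<exists>s\<in>carrier G. \<forall>h\<in>F. norm (\<iota> h s - h z) < e)"
                unfolding L_def mem_Collect_eq by (rule conjunct2)
              have "e/2 > 0" using Fe by simp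
              then obtain s where s: "s \<in> carrier G" and sp2: "\<forall>h\<in>F. norm (\<iota> h s - h z) < e/2"
                using zL[rule_format, of F "e/2"] Fe by blast
              obtain h where hF: "h \<in> F" and hb: "norm (\<iota> h s - h y) \<ge> e" using no[OF s] by blast
              have "norm (\<iota> h s - h y) \<le> norm (\<iota> h s - h z) + norm (h z - h y)"
                by (rule norm_diff_triangle_le[of _ "h z"]) simp_all
              moreover have "norm (h z - h y) < e/2" using zT hF unfolding T_def by blast
              moreover have "norm (\<iota> h s - h z) < e/2" using sp2 hF by blast
              ultimately show False using hb by linarith
            qed
            then show "z \<in> topspace X - L" using zT unfolding T_def by blast
          qed
          ultimately show "\<exists>T. openin X T \<and> y \<in> T \<and> T \<subseteq> topspace X - L" by blast
        qed
        then have Lcl: "closedin X L" unfolding closedin_def using Lsub by blast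
        have Linv: "\<forall>g\<in>carrier G. \<forall>y\<in>L. \<alpha> g y \<in> L"
        proof (intro ballI)
          fix g y assume g: "g \<in> carrier G" and y: "y \<in> L"
          have yt: "y \<in> topspace X" using y Lsub by blast
          show "\<alpha> g y \<in> L" unfolding L_def
          proof (intro CollectI conjI allI impI)
            show "\<alpha> g y \<in> topspace X" by (rule cmap_in[OF cont[OF g] yt])
          next
            fix F e assume H: "finite F \<and> F \<subseteq> Cfun X \<and> (e::real) > 0"
            let ?F = "(\<lambda>h. ctrans G X \<alpha> (inv\<^bsub>G\<^esub> g) h) ` F"
            have fF: "finite ?F" using H by (intro finite_imageI) simp
            have sF: "?F \<subseteq> Cfun X"
            proof (rule image_subsetI)
              fix h assume "h \<in> F" then have "h \<in> Cfun X" using H by blast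
              then show "ctrans G X \<alpha> (inv\<^bsub>G\<^esub> g) h \<in> Cfun X" by (rule ctC[OF g])
            qed
            have yL: "\<forall>F e. finite F \<and> F \<subseteq> Cfun X \<and> e > 0 \<longrightarrow>
                  (\<exists>s\<in>carrier G. \<forall>h\<in>F. norm (\<iota> h s - h y) < e)"
              using y unfolding L_def mem_Collect_eq by (rule conjunct2)
            have "finite ?F \<and> ?F \<subseteq> Cfun X \<and> e > 0" using fF sF H by simp
            from yL[rule_format, OF this] obtain s where s: "s \<in> carrier G" and sp3: "\<forall>h\<in>?F. norm (\<iota> h s - h y) < e"
              by blast
            have "\<forall>h\<in>F. norm (\<iota> h (g \<otimes>\<^bsub>G\<^esub> s) - h (\<alpha> g y)) < e"
            proof
              fix h assume hF: "h \<in> F"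
              have hC: "h \<in> Cfun X" using H hF by blast
              have "norm (\<iota> (ctrans G X \<alpha> (inv\<^bsub>G\<^esub> g) h) s - ctrans G X \<alpha> (inv\<^bsub>G\<^esub> g) h y) < e"
                using sp3 hF by simp
              then show "norm (\<iota> h (g \<otimes>\<^bsub>G\<^esub> s) - h (\<alpha> g y)) < e"
                using shift[OF g s hC] ctA[OF g yt] by simp
            qed
            moreover have "g \<otimes>\<^bsub>G\<^esub> s \<in> carrier G" using g s by simp
            ultimately show "\<exists>s\<in>carrier G. \<forall>h\<in>F. norm (\<iota> h s - h (\<alpha> g y)) < e" by blast
          qed
        qed
        have "closedin X L \<and> L \<noteq> {} \<and> (\<forall>g\<in>carrier G. \<forall>x\<in>L. \<alpha> g x \<in> L)" using Lcl Lne Linv by simp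
        then have Ltop: "L = topspace X" using mn unfolding minimal_gspace_def by simp
        have xL: "x \<in> L" using xt Ltop by simp
        have xLq: "\<forall>F e. finite F \<and> F \<subseteq> Cfun X \<and> e > 0 \<longrightarrow> (\<exists>s\<in>carrier G. \<forall>h\<in>F. norm (\<iota> h s - h x) < e)"
          using xL unfolding L_def mem_Collect_eq by (rule conjunct2)
        define c where "c = norm (f x) / 2"
        have cpos: "c > 0" using fx unfolding c_def by simp
        have nfx: "norm (f x) = 2 * c" unfolding c_def by simp
        define K where "K = {t \<in> carrier G. norm (\<phi> t) \<ge> c}"
        have "\<forall>e>0. finite {t \<in> carrier G. norm (\<phi> t) \<ge> e}"
          using pc0 unfolding c0_def mem_Collect_eq by (rule conjunct2)
        then have Kfin: "finite K" using cpos unfolding K_def by blast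
        have "\<exists>s\<in>carrier G. \<forall>h\<in>Cfun X. \<iota> h s = h x"
        proof (rule ccontr)
          assume nex: "\<not> (\<exists>s\<in>carrier G. \<forall>h\<in>Cfun X. \<iota> h s = h x)"
          have "\<forall>s\<in>K. \<exists>h. h \<in> Cfun X \<and> \<iota> h s \<noteq> h x"
          proof
            fix s assume "s \<in> K"
            then have "s \<in> carrier G" unfolding K_def by simp
            then show "\<exists>h. h \<in> Cfun X \<and> \<iota> h s \<noteq> h x" using nex by blast
          qed
          then obtain H where H: "\<forall>s\<in>K. H s \<in> Cfun X \<and> \<iota> (H s) s \<noteq> H s x" by metis
          define F where "F = insert f (H ` K)"
          define D where "D = insert c ((\<lambda>s. norm (\<iota> (H s) s - H s x)) ` K)"
          define e where "e = Min D"
          have Dfin: "finite D" unfolding D_def using Kfin by simp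
          have Dne: "D \<noteq> {}" unfolding D_def by simp
          have Dpos: "\<forall>d\<in>D. d > 0" unfolding D_def using cpos H by auto
          have epos: "e > 0" unfolding e_def using Min_in[OF Dfin Dne] Dpos by blast
          have ele: "e \<le> c" unfolding e_def D_def using Kfin by simp
          have eles: "e \<le> norm (\<iota> (H s) s - H s x)" if "s \<in> K" for s
            unfolding e_def D_def using Kfin that by simp
          have FC: "F \<subseteq> Cfun X" unfolding F_def using H fC by auto
          have "finite F \<and> F \<subseteq> Cfun X \<and> e > 0" using Kfin FC epos unfolding F_def by simp
          from xLq[rule_format, OF this] obtain s where s: "s \<in> carrier G"
            and sF: "\<forall>h\<in>F. norm (\<iota> h s - h x) < e" by blast
          have "norm (\<phi> s - f x) < e" using sF phi unfolding F_def by simp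
          moreover have "norm (f x) \<le> norm (\<phi> s) + norm (f x - \<phi> s)" by (rule norm_triangle_sub)
          moreover have "norm (f x - \<phi> s) = norm (\<phi> s - f x)" by (rule norm_minus_commute)
          ultimately have "norm (\<phi> s) \<ge> c" using ele nfx by linarith
          then have sK: "s \<in> K" unfolding K_def using s by simp
          then have "norm (\<iota> (H s) s - H s x) < e" using sF unfolding F_def by simp
          then show False using eles[OF sK] by linarith
        qed
        then obtain s where s: "s \<in> carrier G" and sx: "\<And>h. h \<in> Cfun X \<Longrightarrow> \<iota> h s = h x" by blast
        have orb: "\<iota> h (g \<otimes>\<^bsub>G\<^esub> s) = h (\<alpha> g x)" if g: "g \<in> carrier G" and hC: "h \<in> Cfun X" for g h
        proof -
          have "\<iota> h (g \<otimes>\<^bsub>G\<^esub> s) = \<iota> (ctrans G X \<alpha> (inv\<^bsub>G\<^esub> g) h) s" by (rule shift[OF g s hC])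
          also have "\<dots> = ctrans G X \<alpha> (inv\<^bsub>G\<^esub> g) h x" by (rule sx[OF ctC[OF g hC]])
          also have "\<dots> = h (\<alpha> g x)" by (rule ctA[OF g xt])
          finally show ?thesis .
        qed
        define S where "S = {g \<in> carrier G. c \<le> norm (f (\<alpha> g x))}"
        have "S \<subseteq> (\<lambda>k. k \<otimes>\<^bsub>G\<^esub> inv\<^bsub>G\<^esub> s) ` K"
        proof
          fix g assume g: "g \<in> S"
          then have gc: "g \<in> carrier G" and gn: "c \<le> norm (f (\<alpha> g x))" unfolding S_def by simp_all
          have "g \<otimes>\<^bsub>G\<^esub> s \<in> K" unfolding K_def using gc s gn orb[OF gc fC] phi by simp
          moreover have "(g \<otimes>\<^bsub>G\<^esub> s) \<otimes>\<^bsub>G\<^esub> inv\<^bsub>G\<^esub> s = g" using gc s by (simp add: grp.m_assoc grp.r_inv)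
          ultimately show "g \<in> (\<lambda>k. k \<otimes>\<^bsub>G\<^esub> inv\<^bsub>G\<^esub> s) ` K" by (metis image_eqI)
        qed
        then have Sfin: "finite S" using Kfin by (meson finite_imageI finite_subset)
        define Y where "Y = (\<lambda>g. \<alpha> g x) ` S"
        have Yfin: "finite Y" unfolding Y_def using Sfin by simp
        have Ysub: "Y \<subseteq> topspace X"
        proof
          fix y assume "y \<in> Y"
          then obtain g where g: "g \<in> S" and y: "y = \<alpha> g x" unfolding Y_def by blast
          have gc: "g \<in> carrier G" using g unfolding S_def by simp
          show "y \<in> topspace X" unfolding y by (rule cmap_in[OF cont[OF gc] xt])
        qed
        define U where "U = {z \<in> topspace X. f z \<in> {w. c < norm w}}"
        have ee: "{w::complex. c < norm w} = - cball 0 c" by (auto simp: mem_cball_0)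
        have opn: "open {w::complex. c < norm w}" unfolding ee by (rule open_Compl) (rule closed_cball)
        have opn2: "openin euclidean {w::complex. c < norm w}" using opn by simp
        have fcm: "continuous_map X euclidean f" using fC unfolding Cfun_def by simp
        have Uo: "openin X U" unfolding U_def by (rule openin_continuous_map_preimage[OF fcm opn2])
        have "c < norm (f x)" using cpos nfx by linarith
        then have xU: "x \<in> U" unfolding U_def using xt by blast
        have hit: "\<exists>g\<in>carrier G. \<alpha> g y \<in> W" if "openin X W" "W \<noteq> {}" "y \<in> topspace X" for W y
          by (rule minimal_hit[OF grp gs mn that])
        have UY: "U - Y = {}"
        proof (rule ccontr)
          assume ne: "U - Y \<noteq> {}"
          have "openin X (U - Y)" using Uo closedin_Hausdorff_finite[OF hd Ysub Yfin] by (rule openin_diff)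
          from hit[OF this ne xt] obtain g where g: "g \<in> carrier G" and gU: "\<alpha> g x \<in> U - Y" by blast
          then have "g \<in> S" unfolding S_def U_def by simp
          then have "\<alpha> g x \<in> Y" unfolding Y_def by simp
          then show False using gU by simp
        qed
        have xo: "openin X {x}"
        proof -
          have "Y - {x} \<subseteq> topspace X" "finite (Y - {x})" using Ysub Yfin by auto
          then have "openin X (U - (Y - {x}))" using Uo closedin_Hausdorff_finite[OF hd] by (metis openin_diff)
          moreover have "U - (Y - {x}) = {x}" using UY xU by blast
          ultimately show ?thesis by simp
        qed
        have allhit: "\<exists>g\<in>carrier G. \<alpha> g y = x" if "y \<in> topspace X" for y
          using hit[OF xo _ that] by simp
        have sing: "openin X {y}" if yt: "y \<in> topspace X" for y
        proof -
          obtain g where g: "g \<in> carrier G" and gy: "\<alpha> g y = x" using allhit[OF yt] by blast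
          have "{z \<in> topspace X. \<alpha> g z \<in> {x}} = {y}"
          proof
            show "{z \<in> topspace X. \<alpha> g z \<in> {x}} \<subseteq> {y}"
            proof
              fix z assume "z \<in> {z \<in> topspace X. \<alpha> g z \<in> {x}}"
              then have zt: "z \<in> topspace X" and gz: "\<alpha> g z = \<alpha> g y" using gy by auto
              have "z = \<alpha> (inv\<^bsub>G\<^esub> g) (\<alpha> g z)" using gspace_inv_cancel[OF grp gs g zt] by simp
              also have "\<dots> = y" using gz gspace_inv_cancel[OF grp gs g yt] by simp
              finally show "z \<in> {y}" by simp
            qed
            show "{y} \<subseteq> {z \<in> topspace X. \<alpha> g z \<in> {x}}" using yt gy by simp
          qed
          moreover have "openin X {z \<in> topspace X. \<alpha> g z \<in> {x}}"
            by (rule openin_continuous_map_preimage[OF cont[OF g] xo])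
          ultimately show "openin X {y}" by simp
        qed
        have "discrete_topology (topspace X) = X" using sing by (simp add: discrete_topology_unique)
        then have Xfin: "finite (topspace X)" using cpt compact_space_discrete_topology by metis
        define rep where "rep = (\<lambda>y. SOME a. a \<in> carrier G \<and> \<alpha> a x = y)"
        have repP: "rep y \<in> carrier G \<and> \<alpha> (rep y) x = y" if yt: "y \<in> topspace X" for y
        proof -
          obtain g where g: "g \<in> carrier G" and gy: "\<alpha> g y = x" using allhit[OF yt] by blast
          have "inv\<^bsub>G\<^esub> g \<in> carrier G \<and> \<alpha> (inv\<^bsub>G\<^esub> g) x = y"
            using gspace_inv_cancel[OF grp gs g yt] gy grp.inv_closed[OF g] by simp
          then show ?thesis unfolding rep_def by (rule someI)
        qed
        have "carrier G \<subseteq> (\<lambda>(a, b). a \<otimes>\<^bsub>G\<^esub> b) ` (rep ` topspace X \<times> S)"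
        proof
          fix g assume g: "g \<in> carrier G"
          define y where "y = \<alpha> g x"
          have yt: "y \<in> topspace X" unfolding y_def using cmap_in[OF cont[OF g] xt] .
          define a where "a = rep y"
          have a: "a \<in> carrier G" "\<alpha> a x = y" using repP[OF yt] unfolding a_def by simp_all
          define b where "b = inv\<^bsub>G\<^esub> a \<otimes>\<^bsub>G\<^esub> g"
          have ia: "inv\<^bsub>G\<^esub> a \<in> carrier G" using a by simp
          have bc: "b \<in> carrier G" unfolding b_def using ia g by simp
          have "\<alpha> b x = \<alpha> (inv\<^bsub>G\<^esub> a) (\<alpha> g x)" unfolding b_def by (rule mult[OF ia g xt])
          also have "\<dots> = \<alpha> (inv\<^bsub>G\<^esub> a) (\<alpha> a x)" using a y_def by simp
          also have "\<dots> = x" by (rule gspace_inv_cancel[OF grp gs a(1) xt])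
          finally have bx: "\<alpha> b x = x" .
          have "c \<le> norm (f x)" using nfx cpos by simp
          then have bS: "b \<in> S" unfolding S_def using bc bx by simp
          have "a \<otimes>\<^bsub>G\<^esub> b = g" unfolding b_def using a(1) g ia
            by (simp add: grp.m_assoc[symmetric] grp.r_inv)
          moreover have "a \<in> rep ` topspace X" unfolding a_def using yt by simp
          ultimately show "g \<in> (\<lambda>(a, b). a \<otimes>\<^bsub>G\<^esub> b) ` (rep ` topspace X \<times> S)"
            using bS by (metis (no_types, lifting) SigmaI case_prod_conv image_eqI)
        qed
        moreover have "finite ((\<lambda>(a, b). a \<otimes>\<^bsub>G\<^esub> b) ` (rep ` topspace X \<times> S))"
          using Xfin Sfin by simp
        ultimately have "finite (carrier G)" by (rule finite_subset)
        then show False using finite_amenable[OF grp] assms(2) by simp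
      qed
    qed
  qed
qed

end
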